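(* Let $n\ge 2$, and suppose either $n=2$ and $p\geq 2$, or $n\geq 3$ and $p \geq \frac{2n}{n-1}$. Then \[ k_{n,p}(s) \geq \left(\frac{n-1}{n}\right)^p s^p \quad \text{for all } s \geq 0. \]
   Context: Define $\Phi:[0,\infty)\to[0,\infty)$ by $\Phi(t) = n\int_0^t (\sinh r)^{n-1}\,dr$; it is a strictly increasing diffeomorphism with $\Phi(0)=0$ and $\Phi(t)\to\infty$ as $t\to\infty$, with inverse $\Phi^{-1}$. Define $k_{n,p}(s) = \left(\sinh \Phi^{-1}(s)\right)^{p(n-1)} - s^{\frac{p(n-1)}{n}}$ for $s\geq 0$. *)

theory Defs
  imports "HOL-Analysis.Analysis"
begin

definition Phi :: "nat \<Rightarrow> real \<Rightarrow> real" where
  "Phi n t = real n * integral {0..t} (\<lambda>r. (sinh r) ^ (n - 1))"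

definition Phi_inv :: "nat \<Rightarrow> real \<Rightarrow> real" where
  "Phi_inv n = the_inv_into {0..} (Phi n)"

definition k_np :: "nat \<Rightarrow> real \<Rightarrow> real \<Rightarrow> real" where
  "k_np n p s = (sinh (Phi_inv n s)) powr (p * (real n - 1))
               - s powr (p * (real n - 1) / real n)"

end

theory Submission
  imports Defs
begin

lemma cont_sp: "continuous_on S (\<lambda>r::real. (sinh r) ^ k)"
  by (rule continuous_on_power, rule continuous_on_sinh, rule continuous_on_id)

lemma Phi_cont: "continuous_on {0..T} (Phi n)"
proof -
  have "continuous_on {0..T} (\<lambda>x. integral {0..x} (\<lambda>r. (sinh r) ^ (n - 1)))"
    by (intro indefinite_integral_continuous_1 integrable_continuous_real cont_sp)
  then show ?thesis unfolding Phi_def[abs_def] by (intro continuous_intros)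
qed

lemma Phi_deriv:
  assumes "x > 0"
  shows "(Phi n has_real_derivative real n * sinh x ^ (n - 1)) (at x)"
proof -
  have "((\<lambda>x. integral {0..x} (\<lambda>r. (sinh r) ^ (n - 1))) has_real_derivative sinh x ^ (n - 1)) (at x within {0..x+1})"
    apply (rule integral_has_real_derivative[of 0 "x+1" "\<lambda>r. sinh r ^ (n-1)" x])
     apply (rule cont_sp)
    using assms by simp
  moreover have "x \<in> interior {0..x+1}" unfolding interior_atLeastAtMost_real using assms by simp
  then have eq: "at x within {0..x+1} = at x" by (rule at_within_interior)
  ultimately have "((\<lambda>x. integral {0..x} (\<lambda>r. (sinh r) ^ (n - 1))) has_real_derivative sinh x ^ (n - 1)) (at x)"
    by (simp only: eq)
  from DERIV_cmult[OF this, of "real n"] show ?thesis unfolding Phi_def[abs_def] by simp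
qed

lemma Phi_0: "Phi n 0 = 0" by (simp add: Phi_def)

lemma Phi_nonneg: "t \<ge> 0 \<Longrightarrow> Phi n t \<ge> 0"
proof -
  assume t: "t \<ge> 0"
  have "integral {0..t} (\<lambda>r. (sinh r) ^ (n - 1)) \<ge> 0"
    by (rule integral_nonneg) (auto intro!: integrable_continuous_real cont_sp)
  then show ?thesis unfolding Phi_def by simp
qed

lemma mono_aux:
  fixes f :: "real \<Rightarrow> real"
  assumes "0 \<le> T" "continuous_on {0..T} f"
    and "\<And>x. 0 < x \<Longrightarrow> x < T \<Longrightarrow> (\<exists>y. DERIV f x :> y \<and> y \<ge> 0)"
  shows "f 0 \<le> f T"
  using DERIV_nonneg_imp_increasing_open[OF assms(1) assms(3) assms(2)] by auto

lemma sinh_ge: "(x::real) \<ge> 0 \<Longrightarrow> x \<le> sinh x"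
proof -
  assume x: "x \<ge> 0"
  have "(\<lambda>t. sinh t - t) 0 \<le> (\<lambda>t. sinh t - t) x"
    apply (rule mono_aux[OF x])
     apply (intro continuous_on_diff continuous_on_sinh continuous_on_id)
    subgoal for y
      apply (rule exI[of _ "cosh y - 1"])
      apply (auto intro!: derivative_eq_intros simp: cosh_real_ge_1)
      done
    done
  then show ?thesis by simp
qed

lemma Phi_ge: assumes "t \<ge> 0" "n \<ge> 2" shows "t ^ n \<le> Phi n t"
proof -
  have "(\<lambda>t. Phi n t - t ^ n) 0 \<le> (\<lambda>t. Phi n t - t ^ n) t"
  proof (rule mono_aux[OF assms(1)])
    show "continuous_on {0..t} (\<lambda>t. Phi n t - t ^ n)"
      by (intro continuous_intros Phi_cont)
    fix x assume x: "0 < x" "x < t"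
    show "\<exists>y. DERIV (\<lambda>t. Phi n t - t ^ n) x :> y \<and> y \<ge> 0"
    proof (intro exI conjI)
      show "DERIV (\<lambda>t. Phi n t - t ^ n) x :> real n * sinh x ^ (n - 1) - real n * x ^ (n - 1)"
        using x by (auto intro!: derivative_eq_intros Phi_deriv)
      have "x ^ (n - 1) \<le> sinh x ^ (n - 1)" using x sinh_ge by (intro power_mono) auto
      then show "real n * sinh x ^ (n - 1) - real n * x ^ (n - 1) \<ge> 0" by (simp add: mult_left_mono)
    qed
  qed
  then show ?thesis using assms by (auto simp: Phi_0 zero_power)
qed

lemma Phi_strict: assumes "0 \<le> a" "a < b" "n \<ge> 2" shows "Phi n a < Phi n b"
proof (rule DERIV_pos_imp_increasing_open[OF assms(2)])
  fix x assume x: "a < x" "x < b"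
  show "\<exists>y. DERIV (Phi n) x :> y \<and> y > 0"
    apply (rule exI[of _ "real n * sinh x ^ (n - 1)"])
    apply (rule conjI)
     apply (rule Phi_deriv) using x assms by auto
next
  show "continuous_on {a..b} (Phi n)"
    using Phi_cont[of b n] assms by (auto elim!: continuous_on_subset)
qed

lemma Phi_inv_props:
  assumes "s \<ge> 0" "n \<ge> 2"
  shows "Phi_inv n s \<ge> 0 \<and> Phi n (Phi_inv n s) = s"
proof -
  have inj: "inj_on (Phi n) {0..}"
    unfolding inj_on_def
  proof (intro ballI impI)
    fix x y :: real assume "x \<in> {0..}" "y \<in> {0..}" "Phi n x = Phi n y"
    then show "x = y" using Phi_strict[of x y n] Phi_strict[of y x n] assms(2)
      by (cases x y rule: linorder_cases) auto
  qed
  have "s \<le> (s+1)^n"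
  proof -
    have "s + 1 \<le> (s+1)^n" using power_increasing[of 1 n "s+1"] assms by simp
    then show ?thesis by simp
  qed
  also have "\<dots> \<le> Phi n (s+1)" using assms by (intro Phi_ge) auto
  finally have **: "s \<le> Phi n (s + 1)" .
  have "Phi n 0 \<le> s" using assms by (simp add: Phi_0)
  from IVT'[of "Phi n" 0 s "s+1", OF this **] Phi_cont[of "s+1" n] assms
  obtain x where "0 \<le> x" "x \<le> s+1" "Phi n x = s" by auto
  then have sim: "s \<in> Phi n ` {0..}" by (metis atLeast_iff image_eqI)
  then have "Phi n (the_inv_into {0..} (Phi n) s) = s" "the_inv_into {0..} (Phi n) s \<in> {0..}"
    using f_the_inv_into_f[OF inj sim] the_inv_into_into[OF inj sim, of "{0..}"] by blast+
  then show ?thesis unfolding Phi_inv_def by simp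
qed


lemma yb:
  assumes "t \<ge> 0" "n \<ge> 2"
  shows "(real n - 1) * Phi n t \<le> real n * sinh t ^ (n - 1)"
proof -
  obtain m where n: "n = m + 2" using assms(2) by (metis add.commute le_Suc_ex)
  let ?f = "\<lambda>t. real n * sinh t ^ (n - 1) - (real n - 1) * Phi n t"
  have "?f 0 \<le> ?f t"
  proof (rule mono_aux[OF assms(1)])
    show "continuous_on {0..t} ?f"
      by (intro continuous_on_diff continuous_on_mult continuous_on_const cont_sp Phi_cont)
    fix x :: real assume x: "0 < x" "x < t"
    show "\<exists>y. DERIV ?f x :> y \<and> y \<ge> 0"
    proof (intro exI conjI)
      show "DERIV ?f x :> real n * (real (n - 1) * sinh x ^ (n - 1 - 1) * cosh x) - (real n - 1) * (real n * sinh x ^ (n - 1))"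
        by (rule derivative_eq_intros Phi_deriv[OF x(1)] refl)+ (simp add: n algebra_simps)
      have "real n * (real (n - 1) * sinh x ^ (n - 1 - 1) * cosh x) - (real n - 1) * (real n * sinh x ^ (n - 1))
         = real n * (real n - 1) * sinh x ^ m * (cosh x - sinh x)"
        by (simp add: n algebra_simps)
      also have "\<dots> \<ge> 0" using x sinh_le_cosh_real[of x] by (simp add: n)
      finally show "real n * (real (n - 1) * sinh x ^ (n - 1 - 1) * cosh x) - (real n - 1) * (real n * sinh x ^ (n - 1)) \<ge> 0" .
    qed
  qed
  then show ?thesis using assms by (simp add: Phi_0 n)
qed


lemma Hn:
  assumes t: "t \<ge> 0" and n3: "n \<ge> 3"
  shows "sinh t ^ n * cosh t - Phi n t - ((real n - 1) / real n * Phi n t) powr ((real n + 1) / (real n - 1)) \<ge> 0"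
proof -
  define c where "c = (real n - 1) / real n"
  define r where "r = (real n + 1) / (real n - 1)"
  have c0: "c > 0" using n3 by (simp add: c_def)
  have r0: "r > 0" using n3 by (simp add: r_def)
  have rcn: "r * c * real n = real n + 1" using n3 by (simp add: r_def c_def field_simps)
  have r1: "r - 1 = 2 / (real n - 1)" using n3 by (simp add: r_def field_simps)
  let ?H = "\<lambda>t. sinh t ^ n * cosh t - Phi n t - (c * Phi n t) powr r"
  have "?H 0 \<le> ?H t"
  proof (rule mono_aux[OF t])
    have cP: "continuous_on {0..t} (\<lambda>t. c * Phi n t)"
      by (intro continuous_on_mult continuous_on_const Phi_cont)
    have "continuous_on {0..t} (\<lambda>t. (c * Phi n t) powr r)"
      by (rule continuous_on_powr'[OF cP continuous_on_const]) (use c0 r0 Phi_nonneg in auto)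
    then show "continuous_on {0..t} ?H"
      by (intro continuous_on_diff continuous_on_mult cont_sp continuous_on_cosh continuous_on_id Phi_cont)
    fix x :: real assume x: "0 < x" "x < t"
    define S where "S = sinh x"
    define C where "C = cosh x"
    define Q where "Q = c * Phi n x"
    have S0: "S > 0" using x by (simp add: S_def)
    have Q0: "Q > 0"
    proof -
      have "0 < x ^ n" using x by simp
      also have "\<dots> \<le> Phi n x" using x n3 by (intro Phi_ge) auto
      finally show ?thesis using c0 by (simp add: Q_def)
    qed
    have QS: "Q \<le> S ^ (n - 1)"
      using yb[of x n] x n3 by (simp add: Q_def S_def c_def field_simps)
    have d1: "DERIV (\<lambda>t. sinh t ^ n * cosh t) x :> real n * S ^ (n - 1) * C * C + S ^ n * S"
      by (rule derivative_eq_intros refl)+ (simp add: S_def C_def algebra_simps)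
    have d2: "DERIV (Phi n) x :> real n * S ^ (n - 1)" unfolding S_def by (rule Phi_deriv[OF x(1)])
    have d3: "DERIV (\<lambda>t. (c * Phi n t) powr r) x :> r * Q powr (r - 1) * (c * (real n * S ^ (n - 1)))"
      using DERIV_fun_powr[OF DERIV_cmult[OF d2, of c], of r] Q0 by (simp add: Q_def)
    define D where "D = real n * S ^ (n - 1) * C * C + S ^ n * S - real n * S ^ (n - 1) - r * Q powr (r - 1) * (c * (real n * S ^ (n - 1)))"
    have dH: "DERIV ?H x :> D"
      unfolding D_def by (rule DERIV_diff[OF DERIV_diff[OF d1 d2] d3])
    have CC: "C * C = S ^ 2 + 1" unfolding S_def C_def using cosh_square_eq[of x] by (simp add: power2_eq_square)
    have Sn: "S ^ n = S ^ (n - 1) * S" using n3 by (metis Suc_diff_1 less_le_trans mult.commute order_less_le_trans power_Suc zero_less_numeral less_numeral_extra(1) not_less_eq_eq numeral_3_eq_3 le_trans)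
    have "D = S ^ (n - 1) * (real n * (C * C) + S * S - real n - (r * c * real n) * Q powr (r - 1))"
      unfolding D_def Sn by (simp add: algebra_simps)
    also have "\<dots> = (real n + 1) * S ^ (n - 1) * (S ^ 2 - Q powr (r - 1))"
      unfolding CC rcn by (simp add: algebra_simps power2_eq_square)
    finally have Deq: "D = (real n + 1) * S ^ (n - 1) * (S ^ 2 - Q powr (r - 1))" .
    have "Q powr (r - 1) \<le> (S ^ (n - 1)) powr (r - 1)"
      using Q0 QS r1 n3 by (intro powr_mono2) auto
    also have "(S ^ (n - 1)) powr (r - 1) = S ^ 2"
    proof -
      have "(S ^ (n - 1)) powr (r - 1) = (S powr real (n - 1)) powr (r - 1)"
        using S0 by (simp add: powr_realpow)
      also have "\<dots> = S powr (real (n - 1) * (r - 1))" by (simp add: powr_powr)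
      also have "real (n - 1) * (r - 1) = 2"
      proof -
        have "real n - 1 > 0" using n3 by simp
        then show ?thesis using n3 r1 by (simp add: of_nat_diff field_simps)
      qed
      finally show ?thesis using S0 by (simp add: powr_realpow[of S 2, simplified])
    qed
    finally have "D \<ge> 0" unfolding Deq using S0 by (intro mult_nonneg_nonneg) auto
    then show "\<exists>y. DERIV ?H x :> y \<and> y \<ge> 0" using dH by blast
  qed
  moreover have "?H 0 = 0" using n3 by (simp add: Phi_0)
  ultimately show ?thesis by (simp add: c_def r_def)
qed


lemma Gn:
  assumes t: "t \<ge> 0" and n3: "n \<ge> 3"
  shows "Phi n t ^ 2 + ((real n - 1) / real n * Phi n t) powr (2 * real n / (real n - 1)) \<le> sinh t ^ (2 * n)"
proof -
  define c where "c = (real n - 1) / real n"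
  define q where "q = 2 * real n / (real n - 1)"
  have n1: "real n - 1 > 0" using n3 by simp
  have c0: "c > 0" using n3 by (simp add: c_def)
  have q0: "q > 0" using n3 by (simp add: q_def)
  have qcn: "q * c * real n = 2 * real n" using n3 n1 by (simp add: q_def c_def field_simps)
  have q1: "q - 1 = (real n + 1) / (real n - 1)" using n1 by (simp add: q_def field_simps)
  let ?G = "\<lambda>t. sinh t ^ (2 * n) - Phi n t ^ 2 - (c * Phi n t) powr q"
  have "?G 0 \<le> ?G t"
  proof (rule mono_aux[OF t])
    have cP: "continuous_on {0..t} (\<lambda>t. c * Phi n t)"
      by (intro continuous_on_mult continuous_on_const Phi_cont)
    have "continuous_on {0..t} (\<lambda>t. (c * Phi n t) powr q)"
      by (rule continuous_on_powr'[OF cP continuous_on_const]) (use c0 q0 Phi_nonneg in auto)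
    then show "continuous_on {0..t} ?G"
      by (intro continuous_on_diff continuous_on_power cont_sp Phi_cont)
    fix x :: real assume x: "0 < x" "x < t"
    define S where "S = sinh x"
    define C where "C = cosh x"
    define P where "P = Phi n x"
    define Q where "Q = c * Phi n x"
    have S0: "S > 0" using x by (simp add: S_def)
    have Q0: "Q > 0"
    proof -
      have "0 < x ^ n" using x by simp
      also have "\<dots> \<le> Phi n x" using x n3 by (intro Phi_ge) auto
      finally show ?thesis using c0 by (simp add: Q_def)
    qed
    have d2: "DERIV (Phi n) x :> real n * S ^ (n - 1)" unfolding S_def by (rule Phi_deriv[OF x(1)])
    have d1: "DERIV (\<lambda>t. sinh t ^ (2 * n)) x :> real (2 * n) * S ^ (2 * n - 1) * C"
      by (rule derivative_eq_intros refl)+ (simp add: S_def C_def algebra_simps)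
    have d2': "DERIV (\<lambda>t. Phi n t ^ 2) x :> 2 * P * (real n * S ^ (n - 1))"
      using DERIV_power[OF d2, of 2] by (simp add: P_def mult.commute mult.left_commute)
    have d3: "DERIV (\<lambda>t. (c * Phi n t) powr q) x :> q * Q powr (q - 1) * (c * (real n * S ^ (n - 1)))"
      using DERIV_fun_powr[OF DERIV_cmult[OF d2, of c], of q] Q0 by (simp add: Q_def)
    define D where "D = real (2 * n) * S ^ (2 * n - 1) * C - 2 * P * (real n * S ^ (n - 1)) - q * Q powr (q - 1) * (c * (real n * S ^ (n - 1)))"
    have dG: "DERIV ?G x :> D"
      unfolding D_def by (rule DERIV_diff[OF DERIV_diff[OF d1 d2'] d3])
    have S2n: "S ^ (2 * n - 1) = S ^ (n - 1) * S ^ n" using n3 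
      by (metis (no_types, lifting) add_diff_assoc2 le_add2 le_trans mult_2 one_le_numeral power_add)
    have "D = 2 * real n * S ^ (n - 1) * (S ^ n * C - P - Q powr (q - 1))"
    proof -
      have "D = S ^ (n - 1) * (2 * real n * S ^ n * C - 2 * real n * P - (q * c * real n) * Q powr (q - 1))"
        unfolding D_def S2n by (simp add: algebra_simps)
      then show ?thesis unfolding qcn by (simp add: algebra_simps)
    qed
    moreover have "S ^ n * C - P - Q powr (q - 1) \<ge> 0"
      using Hn[of x n] x n3 unfolding q1 by (simp add: S_def C_def P_def Q_def c_def)
    ultimately have "D \<ge> 0" using S0 by simp
    then show "\<exists>y. DERIV ?G x :> y \<and> y \<ge> 0" using dG by blast
  qed
  moreover have "?G 0 = 0" using n3 q0 by (simp add: Phi_0)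
  ultimately show ?thesis by (simp add: c_def q_def)
qed


lemma K2:
  assumes t: "t \<ge> 0"
  shows "Phi 2 t \<le> 2 * cosh t - 2"
proof -
  let ?K = "\<lambda>t. 2 * cosh t - 2 - Phi 2 t"
  have "?K 0 \<le> ?K t"
  proof (rule mono_aux[OF t])
    show "continuous_on {0..t} ?K"
      by (intro continuous_on_diff continuous_on_mult continuous_on_const continuous_on_cosh continuous_on_id Phi_cont)
    fix x :: real assume x: "0 < x" "x < t"
    have d2: "DERIV (Phi 2) x :> real 2 * sinh x ^ (2 - 1)" by (rule Phi_deriv[OF x(1)])
    have "DERIV ?K x :> 2 * sinh x - 0 - real 2 * sinh x ^ (2 - 1)"
      by (intro DERIV_diff d2 DERIV_cmult DERIV_const) (rule derivative_eq_intros refl | simp)+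
    then show "\<exists>y. DERIV ?K x :> y \<and> y \<ge> 0" by (intro exI[of _ "2 * sinh x - 0 - real 2 * sinh x ^ (2 - 1)"]) simp
  qed
  then show ?thesis by (simp add: Phi_0)
qed

lemma G2:
  assumes t: "t \<ge> 0"
  shows "Phi 2 t + (Phi 2 t / 2) ^ 2 \<le> sinh t ^ 2"
proof -
  let ?G = "\<lambda>t. sinh t ^ 2 - Phi 2 t - (Phi 2 t / 2) ^ 2"
  have "?G 0 \<le> ?G t"
  proof (rule mono_aux[OF t])
    show "continuous_on {0..t} ?G"
      by (intro continuous_on_diff continuous_on_power continuous_on_divide continuous_on_const cont_sp Phi_cont) auto
    fix x :: real assume x: "0 < x" "x < t"
    have d2: "DERIV (Phi 2) x :> 2 * sinh x" using Phi_deriv[OF x(1), of 2] by simp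
    have d1: "DERIV (\<lambda>t. sinh t ^ 2) x :> 2 * sinh x * cosh x"
      by (rule derivative_eq_intros refl)+ simp
    have d3: "DERIV (\<lambda>t. (Phi 2 t / 2) ^ 2) x :> 2 * (Phi 2 x / 2) * (2 * sinh x / 2)"
      using DERIV_power[OF DERIV_cdivide[OF d2, of 2], of 2] by (simp add: mult.commute)
    have dG: "DERIV ?G x :> 2 * sinh x * cosh x - 2 * sinh x - 2 * (Phi 2 x / 2) * (2 * sinh x / 2)"
      by (rule DERIV_diff[OF DERIV_diff[OF d1 d2] d3])
    have "2 * sinh x * cosh x - 2 * sinh x - 2 * (Phi 2 x / 2) * (2 * sinh x / 2) = sinh x * (2 * cosh x - 2 - Phi 2 x)"
      by (simp add: algebra_simps)
    also have "\<dots> \<ge> 0" using K2[of x] x by simp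
    finally show "\<exists>y. DERIV ?G x :> y \<and> y \<ge> 0" using dG by blast
  qed
  then show ?thesis by (simp add: Phi_0)
qed

lemma superadd:
  fixes u v e :: real
  assumes "u \<ge> 0" "v \<ge> 0" "e \<ge> 1"
  shows "u powr e + v powr e \<le> (u + v) powr e"
proof (cases "u + v = 0")
  case True
  then have "u = 0" "v = 0" using assms by auto
  then show ?thesis using assms by simp
next
  case False
  define w where "w = u + v"
  have w0: "w > 0" using False assms by (simp add: w_def)
  have a: "(u / w) powr e \<le> u / w"
    using powr_mono'[of 1 e "u / w"] assms w0 by (simp add: w_def)
  have b: "(v / w) powr e \<le> v / w"
    using powr_mono'[of 1 e "v / w"] assms w0 by (simp add: w_def)
  have "u powr e + v powr e = w powr e * ((u / w) powr e + (v / w) powr e)"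
    using w0 assms by (simp add: powr_divide algebra_simps)
  also have "\<dots> \<le> w powr e * (u / w + v / w)"
    using a b by (intro mult_left_mono) auto
  also have "\<dots> = w powr e" using w0 by (simp add: w_def add_divide_distrib[symmetric])
  finally show ?thesis by (simp add: w_def)
qed

lemma final_step:
  fixes \<alpha> \<beta> \<gamma> p q :: real
  assumes "\<alpha> \<ge> 0" "\<beta> \<ge> 0" "\<gamma> \<ge> 0" "0 < q" "q \<le> p"
    and h: "\<beta> powr (q / p) + \<gamma> powr (q / p) \<le> \<alpha> powr (q / p)"
  shows "\<beta> + \<gamma> \<le> \<alpha>"
proof -
  have p0: "p > 0" using assms by simp
  define e where "e = p / q"
  have e1: "e \<ge> 1" using assms by (simp add: e_def)
  have inv: "(x powr (q / p)) powr e = x" if "x \<ge> 0" for x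
    using that p0 assms(4) by (simp add: powr_powr e_def)
  have "\<beta> + \<gamma> = (\<beta> powr (q / p)) powr e + (\<gamma> powr (q / p)) powr e"
    using assms inv by simp
  also have "\<dots> \<le> (\<beta> powr (q / p) + \<gamma> powr (q / p)) powr e"
    by (rule superadd) (use e1 in auto)
  also have "\<dots> \<le> (\<alpha> powr (q / p)) powr e"
    using h e1 by (intro powr_mono2) auto
  also have "\<dots> = \<alpha>" using inv assms by simp
  finally show ?thesis .
qed


theorem lemma2p1:
  fixes n :: nat and p s :: real
  assumes "n \<ge> 2"
    and "(n = 2 \<and> p \<ge> 2) \<or> (n \<ge> 3 \<and> p \<ge> 2 * real n / (real n - 1))"
    and "s \<ge> 0"
  shows "k_np n p s \<ge> ((real n - 1) / real n) powr p * s powr p"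
proof -
  define t where "t = Phi_inv n s"
  have t0: "t \<ge> 0" and Pt: "Phi n t = s" using Phi_inv_props[OF assms(3,1)] by (auto simp: t_def)
  define c where "c = (real n - 1) / real n"
  have c0: "c > 0" using assms(1) by (simp add: c_def)
  have S0: "sinh t \<ge> 0" using t0 by simp
  define \<alpha> where "\<alpha> = sinh t powr (p * (real n - 1))"
  define \<beta> where "\<beta> = s powr (p * (real n - 1) / real n)"
  define \<gamma> where "\<gamma> = (c * s) powr p"
  have kk: "k_np n p s = \<alpha> - \<beta>" unfolding k_np_def \<alpha>_def \<beta>_def t_def ..
  have gg: "((real n - 1) / real n) powr p * s powr p = \<gamma>"
  proof -
    have "(c * s) powr p = c powr p * s powr p" by (rule powr_mult)
    then show ?thesis unfolding \<gamma>_def c_def by simp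
  qed
  obtain q where q: "0 < q" "q \<le> p" "\<beta> powr (q / p) + \<gamma> powr (q / p) \<le> \<alpha> powr (q / p)"
  proof (cases "n = 2")
    case True
    then have p2: "p \<ge> 2" using assms(2) by auto
    have "\<alpha> powr (2 / p) = sinh t ^ 2"
    proof -
      have "\<alpha> powr (2 / p) = sinh t powr (p * (real n - 1) * (2 / p))" by (simp add: \<alpha>_def powr_powr)
      also have "p * (real n - 1) * (2 / p) = 2" using True p2 by simp
      finally show ?thesis using S0 powr_realpow'[of "sinh t" 2] by simp
    qed
    moreover have "\<beta> powr (2 / p) = s"
    proof -
      have "\<beta> powr (2 / p) = s powr (p * (real n - 1) / real n * (2 / p))" by (simp add: \<beta>_def powr_powr)
      also have "p * (real n - 1) / real n * (2 / p) = 1" using True p2 by simp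
      finally show ?thesis using assms(3) by simp
    qed
    moreover have "\<gamma> powr (2 / p) = (s / 2) ^ 2"
    proof -
      have "\<gamma> powr (2 / p) = (c * s) powr (p * (2 / p))" by (simp add: \<gamma>_def powr_powr)
      also have "p * (2 / p) = 2" using p2 by simp
      finally show ?thesis using assms(3) c0 powr_realpow'[of "c * s" 2] True by (simp add: c_def)
    qed
    ultimately have "\<beta> powr (2 / p) + \<gamma> powr (2 / p) \<le> \<alpha> powr (2 / p)"
      using G2[OF t0] True Pt by simp
    then show ?thesis using that[of 2] p2 by simp
  next
    case False
    then have n3: "n \<ge> 3" and pq: "p \<ge> 2 * real n / (real n - 1)" using assms(1,2) by auto
    define q where "q = 2 * real n / (real n - 1)"
    have n1: "real n - 1 > 0" using n3 by simp
    have q0: "q > 0" using n1 by (simp add: q_def)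
    have p0: "p > 0" using pq q0 q_def by simp
    have "\<alpha> powr (q / p) = sinh t ^ (2 * n)"
    proof -
      have "\<alpha> powr (q / p) = sinh t powr (p * (real n - 1) * (q / p))" by (simp add: \<alpha>_def powr_powr)
      also have "p * (real n - 1) * (q / p) = real (2 * n)" using n1 p0 by (simp add: q_def)
      finally show ?thesis using S0 powr_realpow'[of "sinh t" "2 * n"] n3 by simp
    qed
    moreover have "\<beta> powr (q / p) = s ^ 2"
    proof -
      have "\<beta> powr (q / p) = s powr (p * (real n - 1) / real n * (q / p))" by (simp add: \<beta>_def powr_powr)
      also have "p * (real n - 1) / real n * (q / p) = real 2" using n1 p0 n3 by (simp add: q_def field_simps)
      finally show ?thesis using assms(3) powr_realpow'[of s 2] by simp
    qed
    moreover have "\<gamma> powr (q / p) = (c * s) powr q"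
      using p0 by (simp add: \<gamma>_def powr_powr)
    ultimately have "\<beta> powr (q / p) + \<gamma> powr (q / p) \<le> \<alpha> powr (q / p)"
      using Gn[OF t0 n3] Pt by (simp add: c_def q_def)
    then show ?thesis using that[of q] q0 pq by (simp add: q_def)
  qed
  have "\<beta> + \<gamma> \<le> \<alpha>"
    by (rule final_step[OF _ _ _ q]) (auto simp: \<alpha>_def \<beta>_def \<gamma>_def)
  then show ?thesis unfolding kk gg by simp
qed

end
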